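(* For every $d\ge1$, $$G_{\mathbb C}.(\Xi_+\times\Xi_+)=\{(z,w)\in\mathrm{dS}^d_{\mathbb C}\times\mathrm{dS}^d_{\mathbb C}\;:\;\beta(z,\overline w)\notin(-\infty,-1]\},$$ where $G_{\mathbb C}$ acts on pairs by $g.(z,w)=(gz,\overline g\,w)$.
   Context: Let $d\ge1$. On $\mathbb C^{1+d}$ let $\beta(z,w)=z_0w_0-z_1w_1-\dots-z_dw_d$, let $\overline z$ denote coordinatewise complex conjugation, $V=\mathbb R^{1+d}$, $V_+=\{x\in V:x_0>0,\beta(x,x)>0\}$, $\mathrm{dS}^d_{\mathbb C}=\{z:\beta(z,z)=-1\}$, $\Xi_+=\mathrm{dS}^d_{\mathbb C}\cap(V+iV_+)$. Let $G_{\mathbb C}=\mathrm{SO}_{1+d}(\mathbb C)$ be the determinant-one complex linear maps preserving $\beta$, and for $g\in G_{\mathbb C}$ let $\overline g$ be its entrywise complex conjugate (again in $G_{\mathbb C}$). *)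

theory Defs
  imports Complex_Main "Jordan_Normal_Form.Determinant"
begin

definition lbeta :: "nat \<Rightarrow> 'a::comm_ring_1 vec \<Rightarrow> 'a vec \<Rightarrow> 'a" where
  "lbeta d z w = z $ 0 * w $ 0 - (\<Sum>i\<in>{1..d}. z $ i * w $ i)"

definition cconj_vec :: "complex vec \<Rightarrow> complex vec" where
  "cconj_vec z = map_vec cnj z"

definition cconj_mat :: "complex mat \<Rightarrow> complex mat" where
  "cconj_mat g = map_mat cnj g"

definition Vplus :: "nat \<Rightarrow> real vec set" where
  "Vplus d = {x \<in> carrier_vec (Suc d). x $ 0 > 0 \<and> lbeta d x x > 0}"

definition dS_C :: "nat \<Rightarrow> complex vec set" where
  "dS_C d = {z \<in> carrier_vec (Suc d). lbeta d z z = -1}"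

definition Xi_plus :: "nat \<Rightarrow> complex vec set" where
  "Xi_plus d = {z \<in> dS_C d. map_vec Im z \<in> Vplus d}"

definition G_C :: "nat \<Rightarrow> complex mat set" where
  "G_C d = {g \<in> carrier_mat (Suc d) (Suc d). det g = 1 \<and>
     (\<forall>z \<in> carrier_vec (Suc d). \<forall>w \<in> carrier_vec (Suc d).
        lbeta d (g *\<^sub>v z) (g *\<^sub>v w) = lbeta d z w)}"

end

theory Submission
  imports Defs
begin


definition sg :: "nat \<Rightarrow> 'a::comm_ring_1" where "sg k = (if k = 0 then 1 else -1)"

lemma sum_1d_shift: "(\<Sum>i\<in>{1..d}. f i) = (\<Sum>i<d. f (Suc i))"
proof -
  have "{1..d} = {Suc 0..<Suc d}" by auto
  thus ?thesis by (simp only: sum.shift_bounds_Suc_ivl atLeast0LessThan)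
qed

lemma lbeta_alt: "lbeta d x y = (\<Sum>k<Suc d. sg k * (x$k * y$k))"
proof -
  have "(\<Sum>k<Suc d. sg k * (x$k * y$k)) = x$0*y$0 + (\<Sum>k<d. - (x$Suc k * y$Suc k))"
    unfolding sum.lessThan_Suc_shift sg_def by simp
  also have "\<dots> = lbeta d x y" unfolding lbeta_def sum_1d_shift sum_negf by simp
  finally show ?thesis by simp
qed

lemma lbeta_sym: "lbeta d x y = lbeta d y x"
  unfolding lbeta_def by (simp add: mult.commute)

lemma lbeta_split: assumes "d \<ge> 1"
  shows "lbeta d x y = x$0*y$0 - x$1*y$1 - (\<Sum>i\<in>{2..d}. x$i*y$i)"
proof -
  have e: "{1..d} = insert 1 {2..d}" using assms by (auto simp: atLeastAtMost_iff)
  have n: "1 \<notin> {2..d}" by simp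
  have "(\<Sum>i\<in>{1..d}. x$i*y$i) = x$1*y$1 + (\<Sum>i\<in>{2..d}. x$i*y$i)"
    unfolding e by (rule sum.insert[OF _ n]) simp
  thus ?thesis unfolding lbeta_def by (simp only: diff_diff_eq)
qed

lemma lbeta_add_left: assumes "x \<in> carrier_vec (Suc d)" "y \<in> carrier_vec (Suc d)"
  shows "lbeta d (x + y) z = lbeta d x z + lbeta d y z"
  unfolding lbeta_alt using assms by (simp add: algebra_simps sum.distrib)

lemma lbeta_minus_left: assumes "x \<in> carrier_vec (Suc d)" "y \<in> carrier_vec (Suc d)"
  shows "lbeta d (x - y) z = lbeta d x z - lbeta d y z"
  unfolding lbeta_alt using assms by (simp add: algebra_simps sum_subtractf)

lemma lbeta_smult_left: assumes "x \<in> carrier_vec (Suc d)"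
  shows "lbeta d (a \<cdot>\<^sub>v x) z = a * lbeta d x z"
  unfolding lbeta_alt using assms by (simp add: algebra_simps sum_distrib_left)

lemma lbeta_add_right: assumes "x \<in> carrier_vec (Suc d)" "y \<in> carrier_vec (Suc d)"
  shows "lbeta d z (x + y) = lbeta d z x + lbeta d z y"
  using lbeta_add_left[OF assms] lbeta_sym by metis

lemma lbeta_minus_right: assumes "x \<in> carrier_vec (Suc d)" "y \<in> carrier_vec (Suc d)"
  shows "lbeta d z (x - y) = lbeta d z x - lbeta d z y"
  using lbeta_minus_left[OF assms] lbeta_sym by metis

lemma lbeta_smult_right: assumes "x \<in> carrier_vec (Suc d)"
  shows "lbeta d z (a \<cdot>\<^sub>v x) = a * lbeta d z x"
  using lbeta_smult_left[OF assms] lbeta_sym by metis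


definition Omat :: "nat \<Rightarrow> complex mat set" where
  "Omat d = {M \<in> carrier_mat (Suc d) (Suc d). \<forall>x\<in>carrier_vec (Suc d). \<forall>y\<in>carrier_vec (Suc d).
      lbeta d (M *\<^sub>v x) (M *\<^sub>v y) = lbeta d x y}"

lemma Omat_mult: assumes "A \<in> Omat d" "B \<in> Omat d" shows "A * B \<in> Omat d"
proof -
  have A: "A \<in> carrier_mat (Suc d) (Suc d)" and B: "B \<in> carrier_mat (Suc d) (Suc d)"
    using assms unfolding Omat_def by auto
  show ?thesis unfolding Omat_def
  proof (intro CollectI conjI ballI)
    show "A * B \<in> carrier_mat (Suc d) (Suc d)" using A B by simp
    fix x y :: "complex vec" assume x: "x \<in> carrier_vec (Suc d)" and y: "y \<in> carrier_vec (Suc d)"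
    have "lbeta d ((A * B) *\<^sub>v x) ((A * B) *\<^sub>v y) = lbeta d (A *\<^sub>v (B *\<^sub>v x)) (A *\<^sub>v (B *\<^sub>v y))"
      using A B x y by (simp add: assoc_mult_mat_vec)
    also have "\<dots> = lbeta d (B *\<^sub>v x) (B *\<^sub>v y)"
      using assms(1) B x y unfolding Omat_def by (auto intro!: mult_mat_vec_carrier)
    also have "\<dots> = lbeta d x y" using assms(2) x y unfolding Omat_def by auto
    finally show "lbeta d ((A * B) *\<^sub>v x) ((A * B) *\<^sub>v y) = lbeta d x y" .
  qed
qed

lemma Omat_carrier: "M \<in> Omat d \<Longrightarrow> M \<in> carrier_mat (Suc d) (Suc d)"
  unfolding Omat_def by auto

lemma Omat_pres: "M \<in> Omat d \<Longrightarrow> x \<in> carrier_vec (Suc d) \<Longrightarrow> y \<in> carrier_vec (Suc d) \<Longrightarrow>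
   lbeta d (M *\<^sub>v x) (M *\<^sub>v y) = lbeta d x y"
  unfolding Omat_def by auto

definition upd_mat :: "nat \<Rightarrow> complex vec \<Rightarrow> complex vec \<Rightarrow> complex mat" where
  "upd_mat d a u = mat (Suc d) (Suc d) (\<lambda>(i,j). (if i = j then 1 else 0) + u$i * (sg j * a$j))"

lemma upd_mat_apply: assumes x: "x \<in> carrier_vec (Suc d)" and u: "u \<in> carrier_vec (Suc d)"
  shows "upd_mat d a u *\<^sub>v x = x + lbeta d a x \<cdot>\<^sub>v u"
proof (rule eq_vecI)
  show "dim_vec (upd_mat d a u *\<^sub>v x) = dim_vec (x + lbeta d a x \<cdot>\<^sub>v u)"
    using x u by (simp add: upd_mat_def)
  fix i assume "i < dim_vec (x + lbeta d a x \<cdot>\<^sub>v u)"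
  hence i: "i < Suc d" using u by simp
  have "(upd_mat d a u *\<^sub>v x) $ i = (\<Sum>j\<in>{0..<Suc d}. ((if i = j then 1 else 0) + u$i * (sg j * a$j)) * x$j)"
    using i x unfolding upd_mat_def by (simp add: scalar_prod_def)
  also have "\<dots> = (\<Sum>j\<in>{0..<Suc d}. (if i = j then x$j else 0) + u$i * (sg j * (a$j * x$j)))"
    by (rule sum.cong) (auto simp: algebra_simps)
  also have "\<dots> = (\<Sum>j\<in>{0..<Suc d}. (if i = j then x$j else 0)) + (\<Sum>j\<in>{0..<Suc d}. u$i * (sg j * (a$j * x$j)))"
    by (rule sum.distrib)
  also have "\<dots> = x$i + u$i * lbeta d a x"
    unfolding sum_distrib_left[symmetric] lbeta_alt atLeast0LessThan using i
    by (simp add: sum.delta del: sum.lessThan_Suc)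
  finally show "(upd_mat d a u *\<^sub>v x) $ i = (x + lbeta d a x \<cdot>\<^sub>v u) $ i"
    using i x u by (simp add: mult.commute)
qed

lemma upd_mat_carrier: "upd_mat d a u \<in> carrier_mat (Suc d) (Suc d)"
  unfolding upd_mat_def by simp

definition refl_mat :: "nat \<Rightarrow> complex vec \<Rightarrow> complex mat" where
  "refl_mat d v = upd_mat d v ((- 2 / lbeta d v v) \<cdot>\<^sub>v v)"

lemma refl_apply: assumes "x \<in> carrier_vec (Suc d)" "v \<in> carrier_vec (Suc d)"
  shows "refl_mat d v *\<^sub>v x = x + (- 2 * lbeta d v x / lbeta d v v) \<cdot>\<^sub>v v"
  unfolding refl_mat_def using assms by (simp add: upd_mat_apply smult_smult_assoc mult.commute)

lemma refl_Omat: assumes v: "v \<in> carrier_vec (Suc d)" and nz: "lbeta d v v \<noteq> 0"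
  shows "refl_mat d v \<in> Omat d"
  unfolding Omat_def
proof (intro CollectI conjI ballI)
  show "refl_mat d v \<in> carrier_mat (Suc d) (Suc d)" unfolding refl_mat_def by (rule upd_mat_carrier)
  fix x y :: "complex vec" assume x: "x \<in> carrier_vec (Suc d)" and y: "y \<in> carrier_vec (Suc d)"
  define B where "B = lbeta d v v"
  define p where "p = - 2 * lbeta d v x / B"
  define q where "q = - 2 * lbeta d v y / B"
  have px: "p \<cdot>\<^sub>v v \<in> carrier_vec (Suc d)" "q \<cdot>\<^sub>v v \<in> carrier_vec (Suc d)" using v by auto
  have "lbeta d (refl_mat d v *\<^sub>v x) (refl_mat d v *\<^sub>v y) = lbeta d (x + p \<cdot>\<^sub>v v) (y + q \<cdot>\<^sub>v v)"
    using refl_apply[OF x v] refl_apply[OF y v] unfolding p_def q_def B_def by simp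
  also have "\<dots> = lbeta d x y + q * lbeta d x v + p * lbeta d v y + p * q * B"
    using x y v px by (simp add: lbeta_add_left lbeta_add_right lbeta_smult_left lbeta_smult_right B_def algebra_simps)
  also have "\<dots> = lbeta d x y"
    using nz unfolding p_def q_def B_def by (simp add: lbeta_sym[of d x v] field_simps)
  finally show "lbeta d (refl_mat d v *\<^sub>v x) (refl_mat d v *\<^sub>v y) = lbeta d x y" .
qed

lemma refl_fix: assumes "x \<in> carrier_vec (Suc d)" "v \<in> carrier_vec (Suc d)" "lbeta d v x = 0"
  shows "refl_mat d v *\<^sub>v x = x"
  using assms by (simp add: refl_apply) (intro eq_vecI, auto)

lemma refl_swap: assumes a: "a \<in> carrier_vec (Suc d)" and b: "b \<in> carrier_vec (Suc d)"
  and eq: "lbeta d a a = lbeta d b b" and nz: "lbeta d (a - b) (a - b) \<noteq> 0"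
  shows "refl_mat d (a - b) *\<^sub>v a = b"
proof -
  have ab: "a - b \<in> carrier_vec (Suc d)" using a b by simp
  have B: "lbeta d (a - b) (a - b) = 2 * lbeta d (a - b) a"
    using a b eq by (simp add: lbeta_minus_left lbeta_minus_right lbeta_sym[of d a b])
  hence "- 2 * lbeta d (a - b) a / lbeta d (a - b) (a - b) = -1" using nz by (simp add: field_simps)
  hence "refl_mat d (a - b) *\<^sub>v a = a + (-1) \<cdot>\<^sub>v (a - b)" using refl_apply[OF a ab] by simp
  also have "\<dots> = b" using a b by (intro eq_vecI) auto
  finally show ?thesis .
qed

lemma refl_fix2: assumes x: "x \<in> carrier_vec (Suc d)" and a: "a \<in> carrier_vec (Suc d)" and b: "b \<in> carrier_vec (Suc d)"
  and eq: "lbeta d x a = lbeta d x b"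
  shows "refl_mat d (a - b) *\<^sub>v x = x"
proof (rule refl_fix[OF x])
  show "a - b \<in> carrier_vec (Suc d)" using a b by simp
  have "lbeta d (a - b) x = lbeta d a x - lbeta d b x" using a b by (rule lbeta_minus_left)
  thus "lbeta d (a - b) x = 0" using eq by (simp add: lbeta_sym[of d x])
qed


lemma sum_delta_at: "finite S \<Longrightarrow> i \<in> S \<Longrightarrow> (\<Sum>k\<in>S. if k = i then c k else 0) = c i"
  by (simp add: sum.delta)


lemma mat_vec_index: assumes "x \<in> carrier_vec n" "i < n"
  shows "(mat n n f *\<^sub>v x) $ i = (\<Sum>j<n. f (i,j) * x$j)"
  using assms by (simp add: scalar_prod_def atLeast0LessThan)

definition Jm :: "nat \<Rightarrow> complex mat" where
  "Jm d = mat (Suc d) (Suc d) (\<lambda>(i,j). if i = j then sg i else 0)"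

lemma sg_sq: "sg i * sg i = (1::'a::comm_ring_1)" unfolding sg_def by simp

lemma Jm_sq: "Jm d * Jm d = 1\<^sub>m (Suc d)"
proof (rule eq_matI)
  fix i j assume i: "i < dim_row (1\<^sub>m (Suc d))" and j: "j < dim_col (1\<^sub>m (Suc d) :: complex mat)"
  hence i': "i < Suc d" and j': "j < Suc d" by auto
  have "(Jm d * Jm d) $$ (i,j) = (\<Sum>k\<in>{0..<Suc d}. (if i = k then sg i else 0) * (if k = j then sg k else 0))"
    using i' j' unfolding Jm_def by (simp add: scalar_prod_def)
  also have "\<dots> = (\<Sum>k\<in>{0..<Suc d}. if k = i then (if i = j then sg i * sg i else 0) else 0)"
    by (rule sum.cong) auto
  also have "\<dots> = (if i = j then sg i * sg i else 0)" using i' by (intro sum_delta_at) auto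
  also have "\<dots> = (if i = j then 1 else 0)" by (simp add: sg_sq)
  finally show "(Jm d * Jm d) $$ (i,j) = 1\<^sub>m (Suc d) $$ (i,j)" using i' j' by simp
qed (auto simp: Jm_def)
lemma Jm_carrier: "Jm d \<in> carrier_mat (Suc d) (Suc d)" unfolding Jm_def by simp

lemma det_Jm: "det (Jm d) \<noteq> 0"
proof -
  have "det (Jm d * Jm d) = det (Jm d) * det (Jm d)" by (rule det_mult[OF Jm_carrier Jm_carrier])
  hence "det (Jm d) * det (Jm d) = 1" unfolding Jm_sq det_one by simp
  thus ?thesis by auto
qed

lemma mat_unit_index: fixes M :: "complex mat" assumes "M \<in> carrier_mat n n" "i < n" "k < n"
  shows "(M *\<^sub>v unit_vec n i) $ k = M $$ (k,i)"
proof -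
  have "(M *\<^sub>v unit_vec n i) $ k = row M k \<bullet> unit_vec n i" using assms by simp
  also have "\<dots> = row M k $ i" using assms(2) by simp
  also have "\<dots> = M $$ (k,i)" using assms by simp
  finally show ?thesis .
qed

lemma Omat_gram: assumes M: "M \<in> Omat d"
  shows "transpose_mat M * (Jm d * M) = Jm d"
proof (rule eq_matI)
  have Mc: "M \<in> carrier_mat (Suc d) (Suc d)" using M by (rule Omat_carrier)
  fix i j assume i: "i < dim_row (Jm d)" and j: "j < dim_col (Jm d)"
  hence i': "i < Suc d" and j': "j < Suc d" by (auto simp: Jm_def)
  have JM: "\<And>k. k < Suc d \<Longrightarrow> (Jm d * M) $$ (k,j) = sg k * M $$ (k,j)"
  proof -
    fix k assume k: "k < Suc d"
    have "(Jm d * M) $$ (k,j) = (\<Sum>l\<in>{0..<Suc d}. (if k = l then sg k else 0) * M $$ (l,j))"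
      using k j' Mc unfolding Jm_def by (simp add: scalar_prod_def)
    also have "\<dots> = (\<Sum>l\<in>{0..<Suc d}. if l = k then sg k * M $$ (k,j) else 0)"
      by (rule sum.cong) auto
    also have "\<dots> = sg k * M $$ (k,j)" using k by (intro sum_delta_at) auto
    finally show "(Jm d * M) $$ (k,j) = sg k * M $$ (k,j)" .
  qed
  have "(transpose_mat M * (Jm d * M)) $$ (i,j) = (\<Sum>k\<in>{0..<Suc d}. M $$ (k,i) * (Jm d * M) $$ (k,j))"
    using i' j' Mc Jm_carrier[of d] by (simp add: scalar_prod_def)
  also have "\<dots> = (\<Sum>k<Suc d. sg k * ((M *\<^sub>v unit_vec (Suc d) i) $ k * (M *\<^sub>v unit_vec (Suc d) j) $ k))"
    unfolding atLeast0LessThan using JM i' j' Mc by (intro sum.cong) (auto simp: mat_unit_index)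
  also have "\<dots> = lbeta d (M *\<^sub>v unit_vec (Suc d) i) (M *\<^sub>v unit_vec (Suc d) j)"
    by (simp add: lbeta_alt)
  also have "\<dots> = lbeta d (unit_vec (Suc d) i) (unit_vec (Suc d) j)"
    using M by (rule Omat_pres) auto
  also have "\<dots> = (\<Sum>k<Suc d. if k = i then (if i = j then sg i else 0) else 0)"
    unfolding lbeta_alt using i' j' by (intro sum.cong) auto
  also have "\<dots> = (if i = j then sg i else 0)" using i' by (intro sum_delta_at) auto
  also have "\<dots> = Jm d $$ (i,j)" using i' j' by (simp add: Jm_def)
  finally show "(transpose_mat M * (Jm d * M)) $$ (i,j) = Jm d $$ (i,j)" .
qed (use Omat_carrier[OF M] in \<open>auto simp: Jm_def\<close>)

lemma Omat_det: assumes M: "M \<in> Omat d" shows "det M = 1 \<or> det M = -1"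
proof -
  have Mc: "M \<in> carrier_mat (Suc d) (Suc d)" using M by (rule Omat_carrier)
  have "det (transpose_mat M * (Jm d * M)) = det M * (det (Jm d) * det M)"
    using Mc Jm_carrier[of d] by (simp add: det_mult det_transpose)
  hence "det (Jm d) * (det M * det M - 1) = 0" using Omat_gram[OF M] by (simp add: algebra_simps)
  hence "det M * det M = 1" using det_Jm[of d] by simp
  hence "(det M - 1) * (det M + 1) = 0" by (simp add: algebra_simps)
  thus ?thesis by (simp add: eq_neg_iff_add_eq_0)
qed

lemma Omat_inv: assumes M: "M \<in> Omat d" and dM: "det M = 1"
  shows "\<exists>g \<in> G_C d. \<forall>x \<in> carrier_vec (Suc d). g *\<^sub>v (M *\<^sub>v x) = x"
proof -
  have Mc: "M \<in> carrier_mat (Suc d) (Suc d)" using M by (rule Omat_carrier)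
  have "M \<in> Units (ring_mat TYPE(complex) (Suc d) undefined)"
    using det_non_zero_imp_unit[OF Mc] dM by simp
  then obtain B where B: "B \<in> carrier_mat (Suc d) (Suc d)" and BM: "B * M = 1\<^sub>m (Suc d)" and MB: "M * B = 1\<^sub>m (Suc d)"
    by (auto simp: Units_def ring_mat_def)
  have "det B * det M = 1" using det_mult[OF B Mc] BM by simp
  hence dB: "det B = 1" using dM by simp
  have pres: "lbeta d (B *\<^sub>v x) (B *\<^sub>v y) = lbeta d x y"
    if x: "x \<in> carrier_vec (Suc d)" and y: "y \<in> carrier_vec (Suc d)" for x y
  proof -
    have "lbeta d (B *\<^sub>v x) (B *\<^sub>v y) = lbeta d (M *\<^sub>v (B *\<^sub>v x)) (M *\<^sub>v (B *\<^sub>v y))"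
      using Omat_pres[OF M, of "B *\<^sub>v x" "B *\<^sub>v y"] B x y by simp
    also have "\<dots> = lbeta d x y" using B Mc x y MB
      by (simp add: assoc_mult_mat_vec[symmetric])
    finally show ?thesis .
  qed
  have "B \<in> G_C d" unfolding G_C_def using B dB pres by auto
  moreover have "\<forall>x \<in> carrier_vec (Suc d). B *\<^sub>v (M *\<^sub>v x) = x"
    using B Mc BM by (simp add: assoc_mult_mat_vec[symmetric])
  ultimately show ?thesis by blast
qed




lemma CS_sum: fixes y v :: "nat \<Rightarrow> real" assumes "finite I"
  shows "(\<Sum>i\<in>I. y i * v i)^2 \<le> (\<Sum>i\<in>I. (y i)^2) * (\<Sum>i\<in>I. (v i)^2)"
proof -
  define A where "A = (\<Sum>i\<in>I. (y i)^2)"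
  define B where "B = (\<Sum>i\<in>I. (v i)^2)"
  define C where "C = (\<Sum>i\<in>I. y i * v i)"
  have "0 \<le> (\<Sum>i\<in>I. \<Sum>j\<in>I. (y i * v j - y j * v i)^2)" by (intro sum_nonneg) auto
  also have "\<dots> = (\<Sum>i\<in>I. \<Sum>j\<in>I. (y i)^2 * (v j)^2 + (v i)^2 * (y j)^2 - 2 * ((y i * v i) * (y j * v j)))"
    by (intro sum.cong refl) (simp add: power2_eq_square algebra_simps)
  also have "\<dots> = (\<Sum>i\<in>I. \<Sum>j\<in>I. (y i)^2 * (v j)^2) + (\<Sum>i\<in>I. \<Sum>j\<in>I. (v i)^2 * (y j)^2)
        - 2 * (\<Sum>i\<in>I. \<Sum>j\<in>I. (y i * v i) * (y j * v j))"
    by (simp only: sum.distrib sum_subtractf sum_distrib_left)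
  also have "\<dots> = A * B + B * A - 2 * (C * C)"
    unfolding A_def B_def C_def sum_product by simp
  finally have "0 \<le> 2 * (A * B) - 2 * C^2" by (simp add: power2_eq_square algebra_simps)
  thus ?thesis unfolding A_def B_def C_def by simp
qed

lemma lbeta_real_def: "lbeta d x y = x$0 * y$0 - (\<Sum>i\<in>{1..d}. x$i * y$i)"
  by (simp add: lbeta_def)

lemma spacelike: fixes a b :: "real vec"
  assumes ab: "lbeta d a b = 0" and bb: "lbeta d b b > 0"
  shows "lbeta d a a \<le> 0"
proof (rule ccontr)
  assume "\<not> lbeta d a a \<le> 0"
  define Saa where "Saa = (\<Sum>i\<in>{1..d}. (a$i)^2)"
  define Sbb where "Sbb = (\<Sum>i\<in>{1..d}. (b$i)^2)"
  define Sab where "Sab = (\<Sum>i\<in>{1..d}. a$i * b$i)"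
  have 1: "(a$0)^2 > Saa" using \<open>\<not> lbeta d a a \<le> 0\<close> unfolding lbeta_def Saa_def by (simp add: power2_eq_square)
  have 2: "(b$0)^2 > Sbb" using bb unfolding lbeta_def Sbb_def by (simp add: power2_eq_square)
  have 3: "a$0 * b$0 = Sab" using ab unfolding lbeta_def Sab_def by simp
  have cs: "Sab^2 \<le> Saa * Sbb" unfolding Sab_def Saa_def Sbb_def by (rule CS_sum) simp
  have p1: "Saa \<ge> 0" "Sbb \<ge> 0" unfolding Saa_def Sbb_def by (auto intro: sum_nonneg)
  have "Saa * Sbb < (a$0)^2 * (b$0)^2"
  proof -
    have "Saa * Sbb \<le> Saa * (b$0)^2" using p1 2 by (intro mult_left_mono) auto
    also have "\<dots> < (a$0)^2 * (b$0)^2" using 1 2 p1 by (intro mult_strict_right_mono) auto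
    finally show ?thesis .
  qed
  also have "\<dots> = Sab^2" using 3 by (simp add: power_mult_distrib[symmetric])
  finally show False using cs by simp
qed

lemma Vplus_pos: assumes y: "y \<in> Vplus d" and v: "v \<in> Vplus d"
  shows "lbeta d y v > 0"
proof -
  define Syy where "Syy = (\<Sum>i\<in>{1..d}. (y$i)^2)"
  define Svv where "Svv = (\<Sum>i\<in>{1..d}. (v$i)^2)"
  define Syv where "Syv = (\<Sum>i\<in>{1..d}. y$i * v$i)"
  have y0: "y$0 > 0" and v0: "v$0 > 0" using y v unfolding Vplus_def by auto
  have 1: "(y$0)^2 > Syy" using y unfolding Vplus_def lbeta_def Syy_def by (simp add: power2_eq_square)
  have 2: "(v$0)^2 > Svv" using v unfolding Vplus_def lbeta_def Svv_def by (simp add: power2_eq_square)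
  have cs: "Syv^2 \<le> Syy * Svv" unfolding Syv_def Syy_def Svv_def by (rule CS_sum) simp
  have p1: "Syy \<ge> 0" "Svv \<ge> 0" unfolding Syy_def Svv_def by (auto intro: sum_nonneg)
  have "Syy * Svv < (y$0)^2 * (v$0)^2"
  proof -
    have "Syy * Svv \<le> Syy * (v$0)^2" using p1 2 by (intro mult_left_mono) auto
    also have "\<dots> < (y$0)^2 * (v$0)^2" using 1 2 p1 by (intro mult_strict_right_mono) auto
    finally show ?thesis .
  qed
  hence sq: "Syv^2 < (y$0 * v$0)^2" using cs by (simp add: power_mult_distrib)
  have "0 \<le> y$0 * v$0" using y0 v0 by simp
  hence "Syv < y$0 * v$0" using power_less_imp_less_base[OF sq] by blast
  thus ?thesis unfolding lbeta_def Syv_def by simp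
qed


lemma cconj_carrier[simp]: "x \<in> carrier_vec n \<Longrightarrow> cconj_vec x \<in> carrier_vec n"
  unfolding cconj_vec_def by simp

lemma cconj_cconj[simp]: "cconj_vec (cconj_vec x) = x"
  unfolding cconj_vec_def by (intro eq_vecI) auto

lemma lbeta_cnj: assumes x: "x \<in> carrier_vec (Suc d)" and y: "y \<in> carrier_vec (Suc d)"
  shows "lbeta d (cconj_vec x) (cconj_vec y) = cnj (lbeta d x y)"
proof -
  have "(\<Sum>i\<in>{1..d}. cconj_vec x $ i * cconj_vec y $ i) = (\<Sum>i\<in>{1..d}. cnj (x$i * y$i))"
    using x y unfolding cconj_vec_def by (intro sum.cong refl) auto
  moreover have "cconj_vec x $ 0 * cconj_vec y $ 0 = cnj (x$0 * y$0)"
    using x y unfolding cconj_vec_def by auto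
  ultimately show ?thesis unfolding lbeta_def by (simp add: cnj_sum)
qed

lemma conj_mult: assumes g: "g \<in> carrier_mat (Suc d) (Suc d)" and w: "w \<in> carrier_vec (Suc d)"
  shows "cconj_vec (cconj_mat g *\<^sub>v w) = g *\<^sub>v cconj_vec w"
proof (rule eq_vecI)
  show "dim_vec (cconj_vec (cconj_mat g *\<^sub>v w)) = dim_vec (g *\<^sub>v cconj_vec w)"
    using g unfolding cconj_vec_def cconj_mat_def by simp
  fix i assume "i < dim_vec (g *\<^sub>v cconj_vec w)"
  hence i: "i < Suc d" using g by simp
  have "cconj_vec (cconj_mat g *\<^sub>v w) $ i = cnj (\<Sum>j\<in>{0..<Suc d}. cnj (g $$ (i,j)) * w $ j)"
    using i g w unfolding cconj_vec_def cconj_mat_def by (simp add: scalar_prod_def)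
  also have "\<dots> = (\<Sum>j\<in>{0..<Suc d}. g $$ (i,j) * cconj_vec w $ j)"
    unfolding cnj_sum using w unfolding cconj_vec_def by (intro sum.cong refl) auto
  also have "\<dots> = row g i \<bullet> cconj_vec w"
    unfolding scalar_prod_def using g i w by (intro sum.cong) (auto simp: cconj_vec_def)
  also have "\<dots> = (g *\<^sub>v cconj_vec w) $ i"
    using i g by simp
  finally show "cconj_vec (cconj_mat g *\<^sub>v w) $ i = (g *\<^sub>v cconj_vec w) $ i" .
qed

lemma lbeta_ReIm: assumes z: "z \<in> carrier_vec (Suc d)"
  shows "Re (lbeta d z z) = lbeta d (map_vec Re z) (map_vec Re z) - lbeta d (map_vec Im z) (map_vec Im z)"
    and "Im (lbeta d z z) = 2 * lbeta d (map_vec Re z) (map_vec Im z)"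
proof -
  have s1: "(\<Sum>i\<in>{1..d}. Re (z$i * z$i)) = (\<Sum>i\<in>{1..d}. map_vec Re z $ i * map_vec Re z $ i)
     - (\<Sum>i\<in>{1..d}. map_vec Im z $ i * map_vec Im z $ i)"
    unfolding sum_subtractf[symmetric] using z by (intro sum.cong refl) auto
  have s2: "(\<Sum>i\<in>{1..d}. Im (z$i * z$i)) = 2 * (\<Sum>i\<in>{1..d}. map_vec Re z $ i * map_vec Im z $ i)"
    unfolding sum_distrib_left using z by (intro sum.cong refl) auto
  show "Re (lbeta d z z) = lbeta d (map_vec Re z) (map_vec Re z) - lbeta d (map_vec Im z) (map_vec Im z)"
    unfolding lbeta_def using s1 z by simp
  show "Im (lbeta d z z) = 2 * lbeta d (map_vec Re z) (map_vec Im z)"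
    unfolding lbeta_def using s2 z by (simp add: algebra_simps)
qed

lemma Vplus_sum: assumes y: "y \<in> Vplus d" and v: "v \<in> Vplus d"
  shows "lbeta d (y + v) (y + v) > 0"
proof -
  have yc: "y \<in> carrier_vec (Suc d)" and vc: "v \<in> carrier_vec (Suc d)" using y v unfolding Vplus_def by auto
  have "lbeta d (y + v) (y + v) = lbeta d y y + 2 * lbeta d y v + lbeta d v v"
    using yc vc by (simp add: lbeta_add_left lbeta_add_right lbeta_sym[of d v y])
  moreover have "lbeta d y y > 0" "lbeta d v v > 0" using y v unfolding Vplus_def by auto
  moreover have "lbeta d y v > 0" using y v by (rule Vplus_pos)
  ultimately show ?thesis by simp
qed

lemma left_main: assumes z: "z \<in> Xi_plus d" and w: "w \<in> Xi_plus d"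
  shows "lbeta d z (cconj_vec w) \<notin> complex_of_real ` {.. -1}"
proof
  assume "lbeta d z (cconj_vec w) \<in> complex_of_real ` {.. -1}"
  then obtain r where r: "r \<le> -1" and c: "lbeta d z (cconj_vec w) = complex_of_real r" by auto
  have zc: "z \<in> carrier_vec (Suc d)" and zz: "lbeta d z z = -1" and zi: "map_vec Im z \<in> Vplus d"
    using z unfolding Xi_plus_def dS_C_def by auto
  have wc: "w \<in> carrier_vec (Suc d)" and ww: "lbeta d w w = -1" and wi: "map_vec Im w \<in> Vplus d"
    using w unfolding Xi_plus_def dS_C_def by auto
  have wbc: "cconj_vec w \<in> carrier_vec (Suc d)" using wc by simp
  have wwb: "lbeta d (cconj_vec w) (cconj_vec w) = -1" using lbeta_cnj[OF wc wc] ww by simp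
  define \<zeta> where "\<zeta> = z - cconj_vec w"
  have \<zeta>c: "\<zeta> \<in> carrier_vec (Suc d)" unfolding \<zeta>_def using zc wbc by simp
  have "lbeta d \<zeta> \<zeta> = lbeta d z z - 2 * lbeta d z (cconj_vec w) + lbeta d (cconj_vec w) (cconj_vec w)"
    unfolding \<zeta>_def using zc wbc by (simp add: lbeta_minus_left lbeta_minus_right lbeta_sym[of d "cconj_vec w" z])
  hence zz2: "lbeta d \<zeta> \<zeta> = complex_of_real (-2 - 2 * r)" using zz wwb c by simp
  define a where "a = map_vec Re \<zeta>"
  define b where "b = map_vec Im \<zeta>"
  have b: "b = map_vec Im z + map_vec Im w"
    unfolding b_def \<zeta>_def cconj_vec_def using zc wc by (intro eq_vecI) auto
  have bb: "lbeta d b b > 0" unfolding b using zi wi by (rule Vplus_sum)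
  have "Im (lbeta d \<zeta> \<zeta>) = 2 * lbeta d a b" unfolding a_def b_def by (rule lbeta_ReIm(2)[OF \<zeta>c])
  hence ab: "lbeta d a b = 0" using zz2 by simp
  have aa: "lbeta d a a \<le> 0" using spacelike[OF ab bb] .
  have "Re (lbeta d \<zeta> \<zeta>) = lbeta d a a - lbeta d b b" unfolding a_def b_def by (rule lbeta_ReIm(1)[OF \<zeta>c])
  hence "-2 - 2 * r = lbeta d a a - lbeta d b b" using zz2 by simp
  thus False using aa bb r by linarith
qed




lemma sum_support: assumes "finite S" "A \<subseteq> S" "\<forall>x\<in>S - A. f x = 0"
  shows "sum f S = sum f A"
  using assms by (rule sum.mono_neutral_right)

lemma sum_zero_2d: assumes "\<forall>i\<in>{2..d}. q$i = (0::'a::comm_ring_1)"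
  shows "(\<Sum>i\<in>{2..d}. x$i * q$i) = 0" "(\<Sum>i\<in>{2..d}. q$i * x$i) = 0"
  using assms by auto

lemma xi2: assumes d: "d \<ge> 1" and qc: "q \<in> carrier_vec (Suc d)" and z: "\<forall>i\<in>{2..d}. q$i = 0"
  and m: "(q$1 - q$0) * (q$1 + q$0) = 1" and pos: "Im (q$1 + q$0) > 0"
  shows "q \<in> Xi_plus d"
proof -
  define W where "W = q$1 + q$0"
  define M where "M = q$1 - q$0"
  have MW: "M * W = 1" using m unfolding M_def W_def .
  hence Minv: "M = inverse W" by (metis inverse_unique mult.commute)
  have ImW: "Im W > 0" using pos unfolding W_def .
  have "Im M = - Im W / ((Re W)^2 + (Im W)^2)" unfolding Minv by simp
  moreover have "(Re W)^2 + (Im W)^2 > 0" using ImW by (simp add: add_nonneg_pos)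
  ultimately have ImM: "Im M < 0" using ImW by (simp add: divide_neg_pos)
  have q0: "Im (q$0) = (Im W - Im M) / 2" and q1: "Im (q$1) = (Im W + Im M) / 2"
    unfolding W_def M_def by simp_all
  have "lbeta d q q = q$0 * q$0 - q$1 * q$1"
    using lbeta_split[OF d, of q q] z by simp
  also have "\<dots> = - (M * W)" unfolding M_def W_def by (simp add: algebra_simps)
  finally have dS: "lbeta d q q = -1" using MW by simp
  have Imc: "map_vec Im q \<in> carrier_vec (Suc d)" using qc by simp
  have z': "\<forall>i\<in>{2..d}. map_vec Im q $ i = 0" using z qc by auto
  have "lbeta d (map_vec Im q) (map_vec Im q) = Im (q$0) * Im (q$0) - Im (q$1) * Im (q$1)"
    using lbeta_split[OF d, of "map_vec Im q" "map_vec Im q"] z' qc d by simp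
  also have "\<dots> = - (Im W * Im M)" unfolding q0 q1 by (simp add: field_simps)
  finally have "lbeta d (map_vec Im q) (map_vec Im q) > 0" using ImW ImM by (simp add: mult_pos_neg)
  moreover have "map_vec Im q $ 0 > 0" using qc q0 ImW ImM by simp
  ultimately have "map_vec Im q \<in> Vplus d" unfolding Vplus_def using Imc by simp
  thus ?thesis unfolding Xi_plus_def dS_C_def using qc dS by simp
qed

lemma xi2neg: assumes d: "d \<ge> 1" and qc: "q \<in> carrier_vec (Suc d)" and z: "\<forall>i\<in>{2..d}. q$i = 0"
  and m: "(q$1 - q$0) * (q$1 + q$0) = 1" and neg: "Im (q$1 + q$0) < 0"
  shows "cconj_vec q \<in> Xi_plus d"
proof (rule xi2[OF d])
  have d0: "0 < Suc d" and d1: "1 < Suc d" using d by auto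
  show "cconj_vec q \<in> carrier_vec (Suc d)" using qc by simp
  show "\<forall>i\<in>{2..d}. cconj_vec q $ i = 0" using z qc unfolding cconj_vec_def by auto
  have e0: "cconj_vec q $ 0 = cnj (q$0)" and e1: "cconj_vec q $ 1 = cnj (q$1)"
    using qc d0 d1 unfolding cconj_vec_def by auto
  show "(cconj_vec q $ 1 - cconj_vec q $ 0) * (cconj_vec q $ 1 + cconj_vec q $ 0) = 1"
    unfolding e0 e1 using arg_cong[OF m, of cnj] by simp
  show "Im (cconj_vec q $ 1 + cconj_vec q $ 0) > 0" unfolding e0 e1 using neg by simp
qed

lemma exists_u: fixes X :: complex assumes "X \<noteq> 0" "\<not> (Re X = 0 \<and> Im X > 0)"
  shows "\<exists>u. Re u > 0 \<and> Im (u * X) < 0"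
proof (cases "Im X < 0")
  case True thus ?thesis by (intro exI[of _ 1]) simp
next
  case False
  hence b: "Im X \<ge> 0" by simp
  have a: "Re X \<noteq> 0"
  proof
    assume "Re X = 0"
    hence "Im X > 0" using assms(1) b by (metis complex_eqI less_eq_real_def zero_complex.simps)
    thus False using assms(2) \<open>Re X = 0\<close> by simp
  qed
  define M where "M = (Im X + 1) / Re X"
  have "Im (Complex 1 (- M) * X) = Im X - M * Re X" by simp
  also have "\<dots> = -1" unfolding M_def using a by simp
  finally show ?thesis by (intro exI[of _ "Complex 1 (- M)"]) simp
qed




lemma sum_first2: assumes d: "d \<ge> 1" and z: "\<forall>j. j \<ge> 2 \<longrightarrow> g j = 0"
  shows "(\<Sum>j<Suc d. g j) = g 0 + g (1::nat)"
proof -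
  have "(\<Sum>j<Suc d. g j) = (\<Sum>j\<in>{0,1}. g j)"
    using d z by (intro sum_support) auto
  thus ?thesis by simp
qed

definition bmf :: "complex \<Rightarrow> nat \<times> nat \<Rightarrow> complex" where
  "bmf u ij = (if fst ij \<le> 1 \<and> snd ij \<le> 1 then (if fst ij = snd ij then (u + 1/u)/2 else (u - 1/u)/2)
      else (if fst ij = snd ij then 1 else 0))"

definition bmat :: "nat \<Rightarrow> complex \<Rightarrow> complex mat" where
  "bmat d u = mat (Suc d) (Suc d) (bmf u)"

lemma bmat_carrier: "bmat d u \<in> carrier_mat (Suc d) (Suc d)" unfolding bmat_def by (rule mat_carrier)

lemma bmat_apply: assumes d: "d \<ge> 1" and x: "x \<in> carrier_vec (Suc d)"
  shows "(bmat d u *\<^sub>v x) $ 0 = (u + 1/u)/2 * x$0 + (u - 1/u)/2 * x$1"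
    and "(bmat d u *\<^sub>v x) $ 1 = (u - 1/u)/2 * x$0 + (u + 1/u)/2 * x$1"
    and "\<And>k. 2 \<le> k \<Longrightarrow> k \<le> d \<Longrightarrow> (bmat d u *\<^sub>v x) $ k = x$k"
    and "bmat d u *\<^sub>v x \<in> carrier_vec (Suc d)"
proof -
  have d1: "1 < Suc d" using d by simp
  have "(bmat d u *\<^sub>v x) $ 0 = (\<Sum>j<Suc d. bmf u (0,j) * x$j)" unfolding bmat_def using x by (rule mat_vec_index) simp
  also have "\<dots> = bmf u (0,0) * x$0 + bmf u (0,1) * x$1" by (rule sum_first2[OF d]) (simp add: bmf_def)
  finally show "(bmat d u *\<^sub>v x) $ 0 = (u + 1/u)/2 * x$0 + (u - 1/u)/2 * x$1" by (simp add: bmf_def)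
  have "(bmat d u *\<^sub>v x) $ 1 = (\<Sum>j<Suc d. bmf u (1,j) * x$j)" unfolding bmat_def using x d1 by (rule mat_vec_index)
  also have "\<dots> = bmf u (1,0) * x$0 + bmf u (1,1) * x$1" by (rule sum_first2[OF d]) (simp add: bmf_def)
  finally show "(bmat d u *\<^sub>v x) $ 1 = (u - 1/u)/2 * x$0 + (u + 1/u)/2 * x$1" by (simp add: bmf_def)
  fix k assume k: "2 \<le> k" "k \<le> d"
  have "(bmat d u *\<^sub>v x) $ k = (\<Sum>j<Suc d. bmf u (k,j) * x$j)" unfolding bmat_def using x k by (intro mat_vec_index) auto
  also have "\<dots> = (\<Sum>j<Suc d. (if j = k then x$k else 0))" using k by (intro sum.cong refl) (auto simp: bmf_def)
  also have "\<dots> = x$k" using k by (intro sum_delta_at) auto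
  finally show "(bmat d u *\<^sub>v x) $ k = x$k" .
next
  show "bmat d u *\<^sub>v x \<in> carrier_vec (Suc d)" by (rule mult_mat_vec_carrier[OF bmat_carrier x])
qed

lemma bmat_Omat: assumes d: "d \<ge> 1" and u: "u \<noteq> 0"
  shows "bmat d u \<in> Omat d"
  unfolding Omat_def
proof (intro CollectI conjI ballI)
  show "bmat d u \<in> carrier_mat (Suc d) (Suc d)" by (rule bmat_carrier)
  fix x y :: "complex vec" assume x: "x \<in> carrier_vec (Suc d)" and y: "y \<in> carrier_vec (Suc d)"
  define a where "a = (u + 1/u)/2"
  define b where "b = (u - 1/u)/2"
  have ab: "a * a - b * b = 1" unfolding a_def b_def using u by (simp add: field_simps)
  have s: "(\<Sum>i\<in>{2..d}. (bmat d u *\<^sub>v x) $ i * (bmat d u *\<^sub>v y) $ i) = (\<Sum>i\<in>{2..d}. x $ i * y $ i)"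
    using bmat_apply(3)[OF d x] bmat_apply(3)[OF d y] by (intro sum.cong) auto
  have "lbeta d (bmat d u *\<^sub>v x) (bmat d u *\<^sub>v y) =
     (a * x$0 + b * x$1) * (a * y$0 + b * y$1) - (b * x$0 + a * x$1) * (b * y$0 + a * y$1)
      - (\<Sum>i\<in>{2..d}. x $ i * y $ i)"
    unfolding lbeta_split[OF d] s bmat_apply(1,2)[OF d x] bmat_apply(1,2)[OF d y] a_def b_def ..
  also have "\<dots> = (a * a - b * b) * (x$0 * y$0 - x$1 * y$1) - (\<Sum>i\<in>{2..d}. x $ i * y $ i)"
    by (simp add: algebra_simps)
  also have "\<dots> = lbeta d x y" unfolding ab lbeta_split[OF d] by simp
  finally show "lbeta d (bmat d u *\<^sub>v x) (bmat d u *\<^sub>v y) = lbeta d x y" .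
qed

definition rmf :: "nat \<times> nat \<Rightarrow> complex" where
  "rmf ij = (if fst ij = snd ij then (if fst ij = 1 then -1 else 1) else 0)"

definition Rm :: "nat \<Rightarrow> complex mat" where
  "Rm d = mat (Suc d) (Suc d) rmf"

lemma Rm_carrier: "Rm d \<in> carrier_mat (Suc d) (Suc d)" unfolding Rm_def by (rule mat_carrier)

lemma Rm_apply: assumes x: "x \<in> carrier_vec (Suc d)"
  shows "Rm d *\<^sub>v x = vec (Suc d) (\<lambda>i. if i = 1 then - x$i else x$i)"
proof (rule eq_vecI)
  fix i assume "i < dim_vec (vec (Suc d) (\<lambda>i. if i = 1 then - x$i else x$i))"
  hence i: "i < Suc d" by simp
  have "(Rm d *\<^sub>v x) $ i = (\<Sum>j<Suc d. rmf (i,j) * x$j)" unfolding Rm_def using x i by (rule mat_vec_index)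
  also have "\<dots> = (\<Sum>j<Suc d. (if j = i then (if i = 1 then - x$i else x$i) else 0))"
    by (intro sum.cong refl) (auto simp: rmf_def)
  also have "\<dots> = (if i = 1 then - x$i else x$i)" using i by (intro sum_delta_at) auto
  finally show "(Rm d *\<^sub>v x) $ i = vec (Suc d) (\<lambda>i. if i = 1 then - x$i else x$i) $ i" using i by simp
next
  show "dim_vec (Rm d *\<^sub>v x) = dim_vec (vec (Suc d) (\<lambda>i. if i = 1 then - x$i else x$i))"
    using Rm_carrier[of d] by simp
qed

lemma lbeta_Rm: "lbeta d (vec (Suc d) (\<lambda>i. if i = 1 then - x$i else x$i)) (vec (Suc d) (\<lambda>i. if i = 1 then - y$i else y$i))
   = lbeta d x y"
  unfolding lbeta_alt by (intro sum.cong) auto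

lemma Rm_Omat: "Rm d \<in> Omat d"
  unfolding Omat_def
proof (intro CollectI conjI ballI)
  show "Rm d \<in> carrier_mat (Suc d) (Suc d)" by (rule Rm_carrier)
  fix x y :: "complex vec" assume x: "x \<in> carrier_vec (Suc d)" and y: "y \<in> carrier_vec (Suc d)"
  show "lbeta d (Rm d *\<^sub>v x) (Rm d *\<^sub>v y) = lbeta d x y"
    unfolding Rm_apply[OF x] Rm_apply[OF y] by (rule lbeta_Rm)
qed

lemma prod_list_ones: "prod_list (map (\<lambda>i. 1::complex) xs) = 1" by (induct xs) auto

lemma det_Rm: assumes d: "d \<ge> 1" shows "det (Rm d) = -1"
proof -
  define f where "f = (\<lambda>i::nat. if i = 1 then -1 else (1::complex))"
  have ut: "upper_triangular (Rm d)" unfolding upper_triangular_def Rm_def by (auto simp: rmf_def)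
  have "det (Rm d) = prod_list (diag_mat (Rm d))"
    by (rule det_upper_triangular[OF ut Rm_carrier])
  also have "diag_mat (Rm d) = map f [0..<Suc d]"
    unfolding diag_mat_def Rm_def f_def by (auto simp: rmf_def)
  finally have 1: "det (Rm d) = prod_list (map f [0..<Suc d])" .
  have "[0..<Suc d] = 0 # 1 # [2..<Suc d]" using d by (simp add: upt_conv_Cons numeral_2_eq_2)
  moreover have "map f [2..<Suc d] = map (\<lambda>i. 1::complex) [2..<Suc d]"
    unfolding f_def by (intro map_cong) auto
  ultimately have "map f [0..<Suc d] = 1 # (-1) # map (\<lambda>i. 1::complex) [2..<Suc d]"
    by (simp add: f_def)
  hence "prod_list (map f [0..<Suc d]) = 1 * (-1 * prod_list (map (\<lambda>i. 1::complex) [2..<Suc d]))"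
    by (simp only: prod_list.Cons)
  also have "\<dots> = -1" by (simp only: prod_list_ones mult_1_left mult_1_right)
  finally have 2: "prod_list (map f [0..<Suc d]) = -1" .
  from 1 2 show ?thesis by (rule trans)
qed

lemma Rm_Xi: assumes z: "z \<in> Xi_plus d" shows "Rm d *\<^sub>v z \<in> Xi_plus d"
proof -
  have zc: "z \<in> carrier_vec (Suc d)" and zz: "lbeta d z z = -1" and zi: "map_vec Im z \<in> Vplus d"
    using z unfolding Xi_plus_def dS_C_def by auto
  have c1: "Rm d *\<^sub>v z \<in> carrier_vec (Suc d)" by (rule mult_mat_vec_carrier[OF Rm_carrier zc])
  have c2: "lbeta d (Rm d *\<^sub>v z) (Rm d *\<^sub>v z) = -1" using Omat_pres[OF Rm_Omat zc zc] zz by simp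
  have e: "map_vec Im (Rm d *\<^sub>v z) = vec (Suc d) (\<lambda>i. if i = 1 then - (map_vec Im z)$i else (map_vec Im z)$i)"
    unfolding Rm_apply[OF zc] using zc by (intro eq_vecI) auto
  have l: "lbeta d (map_vec Im (Rm d *\<^sub>v z)) (map_vec Im (Rm d *\<^sub>v z)) = lbeta d (map_vec Im z) (map_vec Im z)"
    unfolding e by (rule lbeta_Rm)
  have c0: "map_vec Im (Rm d *\<^sub>v z) $ 0 = map_vec Im z $ 0" unfolding e by simp
  have cc: "map_vec Im (Rm d *\<^sub>v z) \<in> carrier_vec (Suc d)" unfolding e by simp
  have "map_vec Im (Rm d *\<^sub>v z) \<in> Vplus d"
    using zi l c0 cc unfolding Vplus_def by simp
  thus ?thesis using c1 c2 unfolding Xi_plus_def dS_C_def by blast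
qed

lemma Rm_cconj: assumes x: "x \<in> carrier_vec (Suc d)" shows "cconj_vec (Rm d *\<^sub>v x) = Rm d *\<^sub>v cconj_vec x"
proof -
  have "cconj_vec (Rm d *\<^sub>v x) = vec (Suc d) (\<lambda>i. if i = 1 then - (cconj_vec x)$i else (cconj_vec x)$i)"
    unfolding Rm_apply[OF x] cconj_vec_def using x by (intro eq_vecI) auto
  also have "\<dots> = Rm d *\<^sub>v cconj_vec x" by (rule Rm_apply[symmetric]) (simp add: x)
  finally show ?thesis .
qed




lemma lbeta_diff_sq: assumes "a \<in> carrier_vec (Suc d)" "b \<in> carrier_vec (Suc d)"
  shows "lbeta d (a - b) (a - b) = lbeta d a a - 2 * lbeta d a b + lbeta d b b"
  using assms by (simp add: lbeta_minus_left lbeta_minus_right lbeta_sym[of d b a])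

lemma lbeta_01: assumes d: "d \<ge> 1" and z: "\<forall>i\<in>{2..d}. q$i = 0"
  shows "lbeta d x q = x$0 * q$0 - x$1 * q$1"
  using lbeta_split[OF d, of x q] z by simp

lemma lbeta_kj: assumes k: "k \<in> {1..d}" and j: "j \<in> {1..d}" and kj: "k \<noteq> j"
  and z: "\<forall>i\<in>{1..d}. i \<noteq> k \<and> i \<noteq> j \<longrightarrow> q$i = 0"
  shows "lbeta d x q = x$0 * q$0 - (x$k * q$k + x$j * q$j)"
proof -
  have "(\<Sum>i\<in>{1..d}. x$i * q$i) = (\<Sum>i\<in>{k,j}. x$i * q$i)"
    using k j z by (intro sum_support) auto
  also have "\<dots> = x$k * q$k + x$j * q$j" using kj by simp
  finally show ?thesis unfolding lbeta_def by simp
qed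

definition pvec :: "nat \<Rightarrow> complex vec" where "pvec d = vec (Suc d) (\<lambda>i. if i = 0 then \<i> else 0)"
definition mvec :: "nat \<Rightarrow> complex vec" where "mvec d = vec (Suc d) (\<lambda>i. if i = 0 then - \<i> else 0)"

lemma pvec_carrier[simp]: "pvec d \<in> carrier_vec (Suc d)" unfolding pvec_def by simp
lemma mvec_carrier[simp]: "mvec d \<in> carrier_vec (Suc d)" unfolding mvec_def by simp

lemma lbeta_p: "lbeta d x (pvec d) = x$0 * \<i>"
proof -
  have "(\<Sum>i\<in>{1..d}. x$i * pvec d $ i) = 0" unfolding pvec_def by (intro sum.neutral) auto
  thus ?thesis unfolding lbeta_def by (simp add: pvec_def)
qed

lemma lbeta_m: "lbeta d x (mvec d) = - x$0 * \<i>"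
proof -
  have "(\<Sum>i\<in>{1..d}. x$i * mvec d $ i) = 0" unfolding mvec_def by (intro sum.neutral) auto
  thus ?thesis unfolding lbeta_def by (simp add: mvec_def)
qed

lemma lbeta_p': "lbeta d (pvec d) x = \<i> * x$0" using lbeta_p[of d x] lbeta_sym[of d x] by (simp add: mult.commute)

lemma pvec0[simp]: "pvec d $ 0 = \<i>" unfolding pvec_def by simp
lemma mvec0[simp]: "mvec d $ 0 = - \<i>" unfolding mvec_def by simp

lemma p_Xi: assumes d: "d \<ge> 1" shows "pvec d \<in> Xi_plus d"
proof (rule xi2[OF d])
  have d1: "1 < Suc d" using d by simp
  have p1: "pvec d $ 1 = 0" unfolding pvec_def using d1 by simp
  show "pvec d \<in> carrier_vec (Suc d)" by simp
  show "\<forall>i\<in>{2..d}. pvec d $ i = 0" unfolding pvec_def by auto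
  show "(pvec d $ 1 - pvec d $ 0) * (pvec d $ 1 + pvec d $ 0) = 1" unfolding p1 by simp
  show "Im (pvec d $ 1 + pvec d $ 0) > 0" unfolding p1 by simp
qed

lemma cconj_m: "cconj_vec (mvec d) = pvec d"
  unfolding cconj_vec_def mvec_def pvec_def by (intro eq_vecI) auto

lemma step1: assumes zc: "z \<in> carrier_vec (Suc d)" and zz: "lbeta d z z = -1"
  shows "\<exists>h \<in> Omat d. h *\<^sub>v z = pvec d"
proof -
  have pp: "lbeta d (pvec d) (pvec d) = -1" by (simp add: lbeta_p)
  have mm: "lbeta d (mvec d) (mvec d) = -1" by (simp add: lbeta_m)
  show ?thesis
  proof (cases "lbeta d (z - pvec d) (z - pvec d) = 0")
    case False
    have "refl_mat d (z - pvec d) \<in> Omat d" using zc False by (intro refl_Omat) auto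
    moreover have "refl_mat d (z - pvec d) *\<^sub>v z = pvec d"
      using zc zz pp False by (intro refl_swap) auto
    ultimately show ?thesis by blast
  next
    case True
    hence "-2 - 2 * (z$0 * \<i>) = 0" using lbeta_diff_sq[OF zc pvec_carrier, of] zz pp by (simp add: lbeta_p)
    hence z0: "z$0 * \<i> = -1" by (simp add: algebra_simps)
    have nz1: "lbeta d (z - mvec d) (z - mvec d) \<noteq> 0"
      using lbeta_diff_sq[OF zc mvec_carrier] zz mm z0 by (simp add: lbeta_m)
    have mp: "lbeta d (mvec d - pvec d) (mvec d - pvec d) = -4"
      using lbeta_diff_sq[OF mvec_carrier pvec_carrier] mm pp by (simp add: lbeta_p)
    define h where "h = refl_mat d (mvec d - pvec d) * refl_mat d (z - mvec d)"
    have O1: "refl_mat d (z - mvec d) \<in> Omat d" using zc nz1 by (intro refl_Omat) auto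
    have O2: "refl_mat d (mvec d - pvec d) \<in> Omat d" using mp by (intro refl_Omat) auto
    have "h \<in> Omat d" unfolding h_def by (rule Omat_mult[OF O2 O1])
    moreover have "h *\<^sub>v z = pvec d"
    proof -
      have "h *\<^sub>v z = refl_mat d (mvec d - pvec d) *\<^sub>v (refl_mat d (z - mvec d) *\<^sub>v z)"
        unfolding h_def using Omat_carrier[OF O1] Omat_carrier[OF O2] zc by (simp add: assoc_mult_mat_vec)
      also have "refl_mat d (z - mvec d) *\<^sub>v z = mvec d"
        using zc zz mm nz1 by (intro refl_swap) auto
      also have "refl_mat d (mvec d - pvec d) *\<^sub>v mvec d = pvec d"
        using mm pp mp by (intro refl_swap) auto
      finally show ?thesis .
    qed
    ultimately show ?thesis by blast
  qed
qed




lemma bmat_xi: assumes d: "d \<ge> 1" and qc: "q \<in> carrier_vec (Suc d)" and z: "\<forall>i\<in>{2..d}. q$i = 0"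
  and u: "u \<noteq> 0"
  shows "\<forall>i\<in>{2..d}. (bmat d u *\<^sub>v q) $ i = 0"
    and "(bmat d u *\<^sub>v q)$1 + (bmat d u *\<^sub>v q)$0 = u * (q$1 + q$0)"
    and "(bmat d u *\<^sub>v q)$1 - (bmat d u *\<^sub>v q)$0 = (q$1 - q$0) / u"
proof -
  show "\<forall>i\<in>{2..d}. (bmat d u *\<^sub>v q) $ i = 0" using bmat_apply(3)[OF d qc] z by auto
  show "(bmat d u *\<^sub>v q)$1 + (bmat d u *\<^sub>v q)$0 = u * (q$1 + q$0)"
    unfolding bmat_apply(1,2)[OF d qc] by (simp add: field_simps)
  show "(bmat d u *\<^sub>v q)$1 - (bmat d u *\<^sub>v q)$0 = (q$1 - q$0) / u"
    unfolding bmat_apply(1,2)[OF d qc] using u by (simp add: field_simps)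
qed

lemma not_neg_imag: fixes X c :: complex
  assumes XM: "(\<rho> + \<i> * c) * X = 1" and X: "X = \<rho> - \<i> * c" and nc: "c \<notin> complex_of_real ` {.. -1}"
  shows "\<not> (Re X = 0 \<and> Im X > 0)"
proof
  assume a: "Re X = 0 \<and> Im X > 0"
  define y where "y = Im X"
  have y: "y > 0" using a y_def by simp
  have Xy: "X = \<i> * complex_of_real y" using a unfolding y_def by (simp add: complex_eq_iff)
  have Xnz: "X \<noteq> 0" using y Xy by simp
  have inv: "\<rho> + \<i> * c = 1 / X" using XM Xnz by (simp add: field_simps)
  have "2 * \<i> * c = (\<rho> + \<i> * c) - (\<rho> - \<i> * c)" by (simp add: algebra_simps)
  also have "\<dots> = 1 / X - X" by (simp only: inv[symmetric] X[symmetric])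
  finally have "2 * \<i> * c = 1 / X - X" .
  hence "c = (1 / X - X) / (2 * \<i>)" by (simp add: field_simps)
  also have "\<dots> = complex_of_real (- (1 / y + y) / 2)" unfolding Xy using y
    by (simp add: field_simps complex_eq_iff)
  finally have c: "c = complex_of_real (- (1 / y + y) / 2)" .
  have "(y - 1)^2 \<ge> 0" by simp
  hence "y * y + 1 \<ge> 2 * y" by (simp add: power2_eq_square algebra_simps)
  hence "1 / y + y \<ge> 2" using y by (simp add: field_simps)
  hence "- (1 / y + y) / 2 \<le> -1" by simp
  hence "c \<in> complex_of_real ` {.. -1}" unfolding c by (intro imageI) simp
  thus False using nc by simp
qed

lemma caseA: assumes d: "d \<ge> 1" and w1c: "w1 \<in> carrier_vec (Suc d)" and w1w: "lbeta d w1 w1 = -1"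
  and pw: "lbeta d (pvec d) w1 = c" and cA: "1 - c * c \<noteq> 0" and nc: "c \<notin> complex_of_real ` {.. -1}"
  shows "\<exists>h2\<in>Omat d. h2 *\<^sub>v pvec d \<in> Xi_plus d \<and> cconj_vec (h2 *\<^sub>v w1) \<in> Xi_plus d"
proof -
  have d1: "1 < Suc d" using d by simp
  have w10: "w1$0 = - \<i> * c" using pw unfolding lbeta_p' by (auto simp: field_simps)
  define \<rho>0 where "\<rho>0 = csqrt (1 - c * c)"
  have r0sq: "\<rho>0 * \<rho>0 = 1 - c * c" unfolding \<rho>0_def using power2_csqrt[of "1 - c*c"] by (simp add: power2_eq_square)
  have r0nz: "\<rho>0 \<noteq> 0" using r0sq cA by auto
  define \<rho> where "\<rho> = (if w1$1 = \<rho>0 then - \<rho>0 else \<rho>0)"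
  have rsq: "\<rho> * \<rho> = 1 - c * c" unfolding \<rho>_def using r0sq by auto
  have rne: "\<rho> \<noteq> w1$1" unfolding \<rho>_def using r0nz by auto
  have rnz: "\<rho> \<noteq> 0" unfolding \<rho>_def using r0nz by auto
  define q where "q = vec (Suc d) (\<lambda>i. if i = 0 then - \<i> * c else if i = 1 then \<rho> else 0)"
  have qc: "q \<in> carrier_vec (Suc d)" unfolding q_def by simp
  have q0: "q$0 = - \<i> * c" unfolding q_def by simp
  have q1: "q$1 = \<rho>" unfolding q_def using d1 by simp
  have qz: "\<forall>i\<in>{2..d}. q$i = 0" unfolding q_def by auto
  have lq: "\<And>x. lbeta d x q = x$0 * (- \<i> * c) - x$1 * \<rho>" using lbeta_01[OF d qz] q0 q1 by simp
  have qq: "lbeta d q q = -1" unfolding lq q0 q1 using rsq by (simp add: algebra_simps)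
  have pq: "lbeta d (pvec d) q = c" unfolding lbeta_p' q0 by simp
  have w1q: "lbeta d w1 q = - c * c - w1$1 * \<rho>" unfolding lq w10 by (simp add: algebra_simps)
  have "lbeta d (w1 - q) (w1 - q) = -2 + 2 * c * c + 2 * w1$1 * \<rho>"
    using lbeta_diff_sq[OF w1c qc] w1w qq w1q by (simp add: algebra_simps)
  also have "\<dots> = 2 * \<rho> * (w1$1 - \<rho>) + 2 * (\<rho> * \<rho> - (1 - c * c))" by (simp add: algebra_simps)
  also have "\<dots> = 2 * \<rho> * (w1$1 - \<rho>)" using rsq by simp
  finally have nz: "lbeta d (w1 - q) (w1 - q) \<noteq> 0" using rnz rne by simp
  define h2 where "h2 = refl_mat d (w1 - q)"
  have O2: "h2 \<in> Omat d" unfolding h2_def using w1c qc nz by (intro refl_Omat) auto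
  have h2w: "h2 *\<^sub>v w1 = q" unfolding h2_def using w1c qc w1w qq nz by (intro refl_swap) auto
  have h2p: "h2 *\<^sub>v pvec d = pvec d" unfolding h2_def using w1c qc pw pq by (intro refl_fix2) auto
  define X where "X = q$1 + q$0"
  have "(q$1 - q$0) * X = \<rho> * \<rho> - (\<i> * \<i>) * (c * c)" unfolding X_def q0 q1 by (simp add: algebra_simps)
  hence XM: "(q$1 - q$0) * X = 1" using rsq by simp
  have Xnz: "X \<noteq> 0" using XM by auto
  have XM': "(\<rho> + \<i> * c) * X = 1" using XM unfolding q0 q1 by simp
  have Xe: "X = \<rho> - \<i> * c" unfolding X_def q0 q1 by simp
  have nX: "\<not> (Re X = 0 \<and> Im X > 0)" by (rule not_neg_imag[OF XM' Xe nc])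
  obtain u where u: "Re u > 0" "Im (u * X) < 0" using exists_u[OF Xnz nX] by blast
  have unz: "u \<noteq> 0" using u by auto
  define h3 where "h3 = bmat d u"
  have O3: "h3 \<in> Omat d" unfolding h3_def by (rule bmat_Omat[OF d unz])
  have pz: "\<forall>i\<in>{2..d}. pvec d $ i = 0" unfolding pvec_def by auto
  have p1: "pvec d $ 1 = 0" unfolding pvec_def using d1 by simp
  note bp = bmat_xi[OF d pvec_carrier pz unz]
  note bq = bmat_xi[OF d qc qz unz]
  have X1: "h3 *\<^sub>v pvec d \<in> Xi_plus d"
    unfolding h3_def
  proof (rule xi2[OF d bmat_apply(4)[OF d pvec_carrier] bp(1)])
    show "((bmat d u *\<^sub>v pvec d) $ 1 - (bmat d u *\<^sub>v pvec d) $ 0) * ((bmat d u *\<^sub>v pvec d) $ 1 + (bmat d u *\<^sub>v pvec d) $ 0) = 1"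
      unfolding bp(2,3) p1 using unz by (simp add: field_simps)
    show "Im ((bmat d u *\<^sub>v pvec d) $ 1 + (bmat d u *\<^sub>v pvec d) $ 0) > 0"
      unfolding bp(2) p1 using u by simp
  qed
  have X2: "cconj_vec (h3 *\<^sub>v q) \<in> Xi_plus d"
    unfolding h3_def
  proof (rule xi2neg[OF d bmat_apply(4)[OF d qc] bq(1)])
    show "((bmat d u *\<^sub>v q) $ 1 - (bmat d u *\<^sub>v q) $ 0) * ((bmat d u *\<^sub>v q) $ 1 + (bmat d u *\<^sub>v q) $ 0) = 1"
      unfolding bq(2,3) using unz XM unfolding X_def by (simp add: field_simps)
    show "Im ((bmat d u *\<^sub>v q) $ 1 + (bmat d u *\<^sub>v q) $ 0) < 0"
      unfolding bq(2) using u unfolding X_def by simp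
  qed
  have "h3 * h2 \<in> Omat d" by (rule Omat_mult[OF O3 O2])
  moreover have "(h3 * h2) *\<^sub>v pvec d = h3 *\<^sub>v pvec d"
    using Omat_carrier[OF O3] Omat_carrier[OF O2] h2p by (simp add: assoc_mult_mat_vec)
  moreover have "(h3 * h2) *\<^sub>v w1 = h3 *\<^sub>v q"
    using Omat_carrier[OF O3] Omat_carrier[OF O2] h2w w1c by (simp add: assoc_mult_mat_vec)
  ultimately show ?thesis using X1 X2 by metis
qed




lemma one_Omat: "1\<^sub>m (Suc d) \<in> Omat d"
  unfolding Omat_def by auto

lemma caseB: assumes d: "d \<ge> 1" and w1c: "w1 \<in> carrier_vec (Suc d)" and w1w: "lbeta d w1 w1 = -1"
  and pw: "lbeta d (pvec d) w1 = 1"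
  shows "\<exists>h2\<in>Omat d. h2 *\<^sub>v pvec d \<in> Xi_plus d \<and> cconj_vec (h2 *\<^sub>v w1) \<in> Xi_plus d"
proof -
  have e: "\<i> * w1$0 = 1" using pw unfolding lbeta_p' .
  have "w1$0 = (- \<i>) * (\<i> * w1$0)" by (simp add: mult.assoc[symmetric])
  hence w10: "w1$0 = - \<i>" unfolding e by simp
  have Q: "(\<Sum>i\<in>{1..d}. w1$i * w1$i) = 0" using w1w unfolding lbeta_def w10 by simp
  show ?thesis
  proof (cases "\<forall>i\<in>{1..d}. w1$i = 0")
    case True
    have "w1 = mvec d"
    proof (rule eq_vecI)
      fix i assume "i < dim_vec (mvec d)"
      hence i: "i < Suc d" by (simp add: mvec_def)
      show "w1 $ i = mvec d $ i"
      proof (cases "i = 0")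
        case True thus ?thesis using w10 by simp
      next
        case False thus ?thesis using i \<open>\<forall>i\<in>{1..d}. w1$i = 0\<close> unfolding mvec_def by auto
      qed
    qed (use w1c in \<open>simp add: mvec_def\<close>)
    hence "1\<^sub>m (Suc d) *\<^sub>v pvec d \<in> Xi_plus d \<and> cconj_vec (1\<^sub>m (Suc d) *\<^sub>v w1) \<in> Xi_plus d"
      using p_Xi[OF d] cconj_m[of d] by simp
    thus ?thesis using one_Omat by blast
  next
    case False
    then obtain k where k: "k \<in> {1..d}" and wk: "w1$k \<noteq> 0" by auto
    have "\<exists>j\<in>{1..d}. j \<noteq> k \<and> w1$j \<noteq> 0"
    proof (rule ccontr)
      assume "\<not> ?thesis"
      hence "(\<Sum>i\<in>{1..d}. w1$i * w1$i) = (\<Sum>i\<in>{k}. w1$i * w1$i)"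
        using k by (intro sum_support) auto
      hence "w1$k * w1$k = 0" using Q by simp
      thus False using wk by simp
    qed
    then obtain j where j: "j \<in> {1..d}" and jk: "j \<noteq> k" and wj: "w1$j \<noteq> 0" by blast
    define s :: real where "s = (if w1$k + \<i> * w1$j \<noteq> 0 then 1 else -1)"
    have ss: "complex_of_real s * complex_of_real s = 1" unfolding s_def by simp
    have sne: "w1$k + complex_of_real s * \<i> * w1$j \<noteq> 0"
    proof (cases "w1$k + \<i> * w1$j \<noteq> 0")
      case True thus ?thesis unfolding s_def by simp
    next
      case False
      hence e: "w1$k + \<i> * w1$j = 0" by simp
      show ?thesis
      proof
        assume "w1$k + complex_of_real s * \<i> * w1$j = 0"
        hence "w1$k - \<i> * w1$j = 0" using False unfolding s_def by simp
        hence "2 * w1$k = 0" using e by (simp add: algebra_simps)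
        thus False using wk by simp
      qed
    qed
    have k0: "k \<noteq> 0" and j0: "j \<noteq> 0" and kd: "k < Suc d" and jd: "j < Suc d" using k j by auto
    define q where "q = vec (Suc d) (\<lambda>l. if l = 0 then - \<i> else if l = k then 1/2
        else if l = j then complex_of_real s * \<i> / 2 else 0)"
    have qc: "q \<in> carrier_vec (Suc d)" unfolding q_def by simp
    have q0: "q$0 = - \<i>" unfolding q_def by simp
    have qk: "q$k = 1/2" unfolding q_def using k0 kd by simp
    have qj: "q$j = complex_of_real s * \<i> / 2" unfolding q_def using j0 jd jk by simp
    have qz: "\<forall>i\<in>{1..d}. i \<noteq> k \<and> i \<noteq> j \<longrightarrow> q$i = 0" unfolding q_def by auto
    have lq: "\<And>x. lbeta d x q = x$0 * (- \<i>) - (x$k * (1/2) + x$j * (complex_of_real s * \<i> / 2))"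
      using lbeta_kj[OF k j jk[symmetric] qz] q0 qk qj by (metis jk)
    have qq: "lbeta d q q = -1" unfolding lq q0 qk qj using ss by (simp add: field_simps)
    have pq: "lbeta d (pvec d) q = 1" unfolding lbeta_p' q0 by simp
    have w1q: "lbeta d w1 q = -1 - (w1$k + complex_of_real s * \<i> * w1$j) / 2" unfolding lq w10
      by (simp add: field_simps)
    define Y where "Y = w1$k + complex_of_real s * \<i> * w1$j"
    have "lbeta d (w1 - q) (w1 - q) = -1 - 2 * (-1 - Y / 2) + -1"
      using lbeta_diff_sq[OF w1c qc] w1w qq w1q unfolding Y_def by simp
    also have "\<dots> = Y" by (simp add: algebra_simps)
    finally have "lbeta d (w1 - q) (w1 - q) = w1$k + complex_of_real s * \<i> * w1$j" unfolding Y_def .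
    hence nz: "lbeta d (w1 - q) (w1 - q) \<noteq> 0" using sne by simp
    define h2 where "h2 = refl_mat d (w1 - q)"
    have O2: "h2 \<in> Omat d" unfolding h2_def using w1c qc nz by (intro refl_Omat) auto
    have h2w: "h2 *\<^sub>v w1 = q" unfolding h2_def using w1c qc w1w qq nz by (intro refl_swap) auto
    have h2p: "h2 *\<^sub>v pvec d = pvec d" unfolding h2_def using w1c qc pw pq by (intro refl_fix2) auto
    define r where "r = map_vec Im (cconj_vec q)"
    have rc: "r \<in> carrier_vec (Suc d)" unfolding r_def using qc by simp
    have r0: "r$0 = 1" unfolding r_def using qc q0 by (simp add: cconj_vec_def)
    have rk: "r$k = 0" unfolding r_def using qc kd by (simp add: cconj_vec_def qk)
    have rj: "r$j = - s / 2" unfolding r_def using qc jd by (simp add: cconj_vec_def qj)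
    have rz: "\<forall>i\<in>{1..d}. i \<noteq> k \<and> i \<noteq> j \<longrightarrow> r$i = 0" unfolding r_def using qc qz by (auto simp: cconj_vec_def)
    have s2: "s * s = 1" unfolding s_def by simp
    have "lbeta d r r = 1 - s * s / 4" using lbeta_kj[OF k j jk[symmetric] rz, of r] r0 rk rj
      by (simp add: field_simps)
    hence rr: "lbeta d r r > 0" using s2 by simp
    have cq: "cconj_vec q \<in> Xi_plus d"
      unfolding Xi_plus_def dS_C_def Vplus_def
      using qc rc r0 rr lbeta_cnj[OF qc qc] qq unfolding r_def by simp
    have "h2 *\<^sub>v pvec d \<in> Xi_plus d \<and> cconj_vec (h2 *\<^sub>v w1) \<in> Xi_plus d"
      using h2p h2w p_Xi[OF d] cq by simp
    thus ?thesis using O2 by blast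
  qed
qed




lemma construct: assumes d: "d \<ge> 1" and z: "z \<in> dS_C d" and w: "w' \<in> dS_C d"
  and nc: "lbeta d z w' \<notin> complex_of_real ` {.. -1}"
  shows "\<exists>h\<in>Omat d. h *\<^sub>v z \<in> Xi_plus d \<and> cconj_vec (h *\<^sub>v w') \<in> Xi_plus d"
proof -
  have zc: "z \<in> carrier_vec (Suc d)" and zz: "lbeta d z z = -1" using z unfolding dS_C_def by auto
  have wc: "w' \<in> carrier_vec (Suc d)" and ww: "lbeta d w' w' = -1" using w unfolding dS_C_def by auto
  obtain h1 where O1: "h1 \<in> Omat d" and h1z: "h1 *\<^sub>v z = pvec d" using step1[OF zc zz] by blast
  have h1c: "h1 \<in> carrier_mat (Suc d) (Suc d)" by (rule Omat_carrier[OF O1])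
  define c where "c = lbeta d z w'"
  define w1 where "w1 = h1 *\<^sub>v w'"
  have w1c: "w1 \<in> carrier_vec (Suc d)" unfolding w1_def using h1c wc by simp
  have w1w: "lbeta d w1 w1 = -1" unfolding w1_def using Omat_pres[OF O1 wc wc] ww by simp
  have pw: "lbeta d (pvec d) w1 = c" unfolding w1_def c_def h1z[symmetric] using Omat_pres[OF O1 zc wc] .
  have nc': "c \<notin> complex_of_real ` {.. -1}" using nc unfolding c_def .
  have "\<exists>h2\<in>Omat d. h2 *\<^sub>v pvec d \<in> Xi_plus d \<and> cconj_vec (h2 *\<^sub>v w1) \<in> Xi_plus d"
  proof (cases "1 - c * c = 0")
    case False thus ?thesis by (rule caseA[OF d w1c w1w pw _ nc'])
  next
    case True
    hence "(c - 1) * (c + 1) = 0" by (simp add: algebra_simps)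
    hence "c = 1 \<or> c = -1" by (simp add: eq_neg_iff_add_eq_0)
    moreover have "c \<noteq> -1"
    proof
      assume "c = -1"
      hence "c \<in> complex_of_real ` {.. -1}" by (intro image_eqI[of _ _ "-1"]) auto
      thus False using nc' by simp
    qed
    ultimately have "c = 1" by simp
    thus ?thesis using caseB[OF d w1c w1w] pw by simp
  qed
  then obtain h2 where O2: "h2 \<in> Omat d" and X1: "h2 *\<^sub>v pvec d \<in> Xi_plus d"
    and X2: "cconj_vec (h2 *\<^sub>v w1) \<in> Xi_plus d" by blast
  have h2c: "h2 \<in> carrier_mat (Suc d) (Suc d)" by (rule Omat_carrier[OF O2])
  have "h2 * h1 \<in> Omat d" by (rule Omat_mult[OF O2 O1])
  moreover have "(h2 * h1) *\<^sub>v z = h2 *\<^sub>v pvec d" using h1c h2c zc h1z by (simp add: assoc_mult_mat_vec)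
  moreover have "(h2 * h1) *\<^sub>v w' = h2 *\<^sub>v w1" unfolding w1_def using h1c h2c wc by (simp add: assoc_mult_mat_vec)
  ultimately show ?thesis using X1 X2 by metis
qed

lemma construct_det: assumes d: "d \<ge> 1" and z: "z \<in> dS_C d" and w: "w' \<in> dS_C d"
  and nc: "lbeta d z w' \<notin> complex_of_real ` {.. -1}"
  shows "\<exists>h\<in>Omat d. det h = 1 \<and> h *\<^sub>v z \<in> Xi_plus d \<and> cconj_vec (h *\<^sub>v w') \<in> Xi_plus d"
proof -
  have zc: "z \<in> carrier_vec (Suc d)" using z unfolding dS_C_def by auto
  have wc: "w' \<in> carrier_vec (Suc d)" using w unfolding dS_C_def by auto
  obtain h where O: "h \<in> Omat d" and X1: "h *\<^sub>v z \<in> Xi_plus d" and X2: "cconj_vec (h *\<^sub>v w') \<in> Xi_plus d"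
    using construct[OF d z w nc] by blast
  have hc: "h \<in> carrier_mat (Suc d) (Suc d)" by (rule Omat_carrier[OF O])
  show ?thesis
  proof (cases "det h = 1")
    case True thus ?thesis using O X1 X2 by blast
  next
    case False
    hence dh: "det h = -1" using Omat_det[OF O] by simp
    have "Rm d * h \<in> Omat d" by (rule Omat_mult[OF Rm_Omat O])
    moreover have "det (Rm d * h) = 1" using det_mult[OF Rm_carrier hc] det_Rm[OF d] dh by simp
    moreover have "(Rm d * h) *\<^sub>v z \<in> Xi_plus d"
      using Rm_Xi[OF X1] Rm_carrier[of d] hc zc by (simp add: assoc_mult_mat_vec)
    moreover have "cconj_vec ((Rm d * h) *\<^sub>v w') \<in> Xi_plus d"
    proof -
      have "(Rm d * h) *\<^sub>v w' = Rm d *\<^sub>v (h *\<^sub>v w')" using Rm_carrier[of d] hc wc by (simp add: assoc_mult_mat_vec)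
      hence "cconj_vec ((Rm d * h) *\<^sub>v w') = Rm d *\<^sub>v cconj_vec (h *\<^sub>v w')"
        using Rm_cconj[of "h *\<^sub>v w'" d] hc wc by simp
      thus ?thesis using Rm_Xi[OF X2] by simp
    qed
    ultimately show ?thesis by blast
  qed
qed




theorem mainTheorem4:
  fixes d :: nat
  assumes "d \<ge> 1"
  shows "{(g *\<^sub>v z, cconj_mat g *\<^sub>v w) | g z w. g \<in> G_C d \<and> z \<in> Xi_plus d \<and> w \<in> Xi_plus d}
       = {(z, w). z \<in> dS_C d \<and> w \<in> dS_C d \<and>
            lbeta d z (cconj_vec w) \<notin> complex_of_real ` {.. -1}}"
proof (intro equalityI subsetI)
  fix x assume "x \<in> {(g *\<^sub>v z, cconj_mat g *\<^sub>v w) | g z w. g \<in> G_C d \<and> z \<in> Xi_plus d \<and> w \<in> Xi_plus d}"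
  then obtain g z w where x: "x = (g *\<^sub>v z, cconj_mat g *\<^sub>v w)" and g: "g \<in> G_C d"
    and z: "z \<in> Xi_plus d" and w: "w \<in> Xi_plus d" by blast
  have gc: "g \<in> carrier_mat (Suc d) (Suc d)" and gp: "\<And>a b. a \<in> carrier_vec (Suc d) \<Longrightarrow> b \<in> carrier_vec (Suc d) \<Longrightarrow>
      lbeta d (g *\<^sub>v a) (g *\<^sub>v b) = lbeta d a b" using g unfolding G_C_def by auto
  have zc: "z \<in> carrier_vec (Suc d)" and zz: "lbeta d z z = -1" using z unfolding Xi_plus_def dS_C_def by auto
  have wc: "w \<in> carrier_vec (Suc d)" and ww: "lbeta d w w = -1" using w unfolding Xi_plus_def dS_C_def by auto
  have wbc: "cconj_vec w \<in> carrier_vec (Suc d)" using wc by simp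
  define X where "X = cconj_mat g *\<^sub>v w"
  have cX: "cconj_vec X = g *\<^sub>v cconj_vec w" unfolding X_def by (rule conj_mult[OF gc wc])
  have X: "X = cconj_vec (g *\<^sub>v cconj_vec w)" using arg_cong[OF cX, of cconj_vec] by simp
  have gwc: "g *\<^sub>v cconj_vec w \<in> carrier_vec (Suc d)" using gc wbc by simp
  have gzc: "g *\<^sub>v z \<in> carrier_vec (Suc d)" using gc zc by simp
  have Xc: "X \<in> carrier_vec (Suc d)" unfolding X using gwc by simp
  have "lbeta d X X = cnj (lbeta d (g *\<^sub>v cconj_vec w) (g *\<^sub>v cconj_vec w))"
    unfolding X by (rule lbeta_cnj[OF gwc gwc])
  also have "\<dots> = cnj (lbeta d (cconj_vec w) (cconj_vec w))" using gp[OF wbc wbc] by simp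
  also have "\<dots> = -1" using lbeta_cnj[OF wc wc] ww by simp
  finally have XX: "lbeta d X X = -1" .
  have "lbeta d (g *\<^sub>v z) (cconj_vec X) = lbeta d z (cconj_vec w)" unfolding cX by (rule gp[OF zc wbc])
  hence nc: "lbeta d (g *\<^sub>v z) (cconj_vec X) \<notin> complex_of_real ` {.. -1}" using left_main[OF z w] by simp
  have "lbeta d (g *\<^sub>v z) (g *\<^sub>v z) = -1" using gp[OF zc zc] zz by simp
  thus "x \<in> {(z, w). z \<in> dS_C d \<and> w \<in> dS_C d \<and> lbeta d z (cconj_vec w) \<notin> complex_of_real ` {.. -1}}"
    unfolding x X_def[symmetric] dS_C_def using gzc Xc XX nc by simp
next
  fix x assume "x \<in> {(z, w). z \<in> dS_C d \<and> w \<in> dS_C d \<and> lbeta d z (cconj_vec w) \<notin> complex_of_real ` {.. -1}}"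
  then obtain z w where x: "x = (z, w)" and z: "z \<in> dS_C d" and w: "w \<in> dS_C d"
    and nc: "lbeta d z (cconj_vec w) \<notin> complex_of_real ` {.. -1}" by blast
  have zc: "z \<in> carrier_vec (Suc d)" using z unfolding dS_C_def by auto
  have wc: "w \<in> carrier_vec (Suc d)" and ww: "lbeta d w w = -1" using w unfolding dS_C_def by auto
  have w': "cconj_vec w \<in> dS_C d" unfolding dS_C_def using wc lbeta_cnj[OF wc wc] ww by simp
  obtain h where O: "h \<in> Omat d" and dh: "det h = 1" and X1: "h *\<^sub>v z \<in> Xi_plus d"
    and X2: "cconj_vec (h *\<^sub>v cconj_vec w) \<in> Xi_plus d"
    using construct_det[OF assms z w' nc] by blast
  have hc: "h \<in> carrier_mat (Suc d) (Suc d)" by (rule Omat_carrier[OF O])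
  obtain g where g: "g \<in> G_C d" and gh: "\<forall>x \<in> carrier_vec (Suc d). g *\<^sub>v (h *\<^sub>v x) = x"
    using Omat_inv[OF O dh] by blast
  have gc: "g \<in> carrier_mat (Suc d) (Suc d)" using g unfolding G_C_def by auto
  define w0 where "w0 = cconj_vec (h *\<^sub>v cconj_vec w)"
  have w0c: "w0 \<in> carrier_vec (Suc d)" unfolding w0_def using hc wc by simp
  have "cconj_vec (cconj_mat g *\<^sub>v w0) = g *\<^sub>v cconj_vec w0" by (rule conj_mult[OF gc w0c])
  also have "\<dots> = cconj_vec w" unfolding w0_def using gh wc by simp
  finally have e: "cconj_vec (cconj_mat g *\<^sub>v w0) = cconj_vec w" .
  have "cconj_mat g *\<^sub>v w0 = cconj_vec (cconj_vec (cconj_mat g *\<^sub>v w0))" by simp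
  also have "\<dots> = w" unfolding e by simp
  finally have "cconj_mat g *\<^sub>v w0 = w" .
  moreover have "g *\<^sub>v (h *\<^sub>v z) = z" using gh zc by simp
  ultimately have xe: "x = (g *\<^sub>v (h *\<^sub>v z), cconj_mat g *\<^sub>v w0)" unfolding x by simp
  show "x \<in> {(g *\<^sub>v z, cconj_mat g *\<^sub>v w) | g z w. g \<in> G_C d \<and> z \<in> Xi_plus d \<and> w \<in> Xi_plus d}"
    unfolding mem_Collect_eq
    by (rule exI[of _ g], rule exI[of _ "h *\<^sub>v z"], rule exI[of _ w0]) (use xe g X1 X2 w0_def in simp)
qed


end
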